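(* Let $F:\mathbb{R}\to\mathbb{R}^3$ be a smooth, periodic (closed) regular curve, with period interval $I$, having nowhere vanishing Euclidean curvature $k$ and such that $f=\chi\circ F$ is a $1$-generic curve in $\mathbb{Q}_3$, i.e. $(k')^2+k^2\tau^2\neq0$ everywhere, where $\tau$ is the Euclidean torsion and $'=d/ds_e$ with $s_e$ the Euclidean arclength. Let $s$ be the conformal arclength and $\mu_2$ the second conformal curvature of $f$. Then $$\frac1{2\pi}\int_I\mu_2\,ds\equiv\frac1{2\pi}\int_I\tau\,ds_e\pmod{\mathbb{Z}}.$$ In particular the total twist $\mathrm{Tw}(F)=\frac1{2\pi}\int_I\tau\,ds_e\ (\mathrm{mod}\ \mathbb{Z})$ is invariant under conformal (Möbius) transformations.
   Context: $\chi:\mathbb{R}^3\to\mathbb{Q}_3$, $\chi(x)=[1:x:\tfrac12|x|^2]$, is the conformal embedding of $\mathbb{R}^3$ into the conformal sphere $\mathbb{Q}_3$ = projectivization of the null cone of $\langle v,w\rangle=\sum_{A=1}^3v^Aw^A-v^0w^4-v^4w^0$ on $\mathbb{R}^5$; $\mathrm{M\ddot{o}b}(3)$ is the identity component of the isometry group of this form. For a 1-generic curve $f$ in $\mathbb{Q}_3$ there is a Frenet frame $e:I\to\mathrm{M\ddot{o}b}(3)$, $[e_0]=f$, and smooth functions $\mu_1,\mu_2$ (of arbitrary sign) such that, with $\dot{}=d/ds$: $\dot e_0=e_1$, $\dot e_1=\mu_1e_0+e_4$, $\dot e_2=e_0+\mu_2e_3$, $\dot e_3=-\mu_2e_2$,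 $\dot e_4=\mu_1e_1+e_2$; here $s$ is the conformal arclength and $\mu_1,\mu_2$ are the conformal curvatures. *)

theory Defs
  imports "HOL-Analysis.Analysis"
begin

text \<open>Coordinate convention: a vector v in R^5 with coordinates (v^0,...,v^4) is
  represented as v :: real^5 with v^i = v $ (i+1).\<close>

definition lor :: "real^5 \<Rightarrow> real^5 \<Rightarrow> real" where
  "lor v w = v$2 * w$2 + v$3 * w$3 + v$4 * w$4 - v$1 * w$5 - v$5 * w$1"

text \<open>The isometry group of the form, and its identity component Moeb(3).
  Elements of Moeb(3) are 5x5 matrices; the frame vectors e_0..e_4 are the columns.\<close>

definition lor_isom :: "(real^5^5) set" where
  "lor_isom = {A. \<forall>v w. lor (A *v v) (A *v w) = lor v w}"

definition Moeb3 :: "(real^5^5) set" where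
  "Moeb3 = connected_component_set lor_isom (mat 1)"

definition fv :: "real^5^5 \<Rightarrow> nat \<Rightarrow> real^5" where
  "fv A j = column (of_nat (j+1)) A"

text \<open>Conformal embedding chi(x) = (1, x, |x|^2/2) (representative of [1:x:|x|^2/2]).\<close>
definition chi :: "real^3 \<Rightarrow> real^5" where
  "chi x = vector [1, x$1, x$2, x$3, (norm x)^2 / 2]"

definition vd :: "(real \<Rightarrow> 'a::real_normed_vector) \<Rightarrow> real \<Rightarrow> 'a" where
  "vd f = (\<lambda>t. vector_derivative f (at t))"

definition smooth :: "(real \<Rightarrow> 'a::real_normed_vector) \<Rightarrow> bool" where
  "smooth f \<longleftrightarrow> (\<forall>n t. ((vd ^^ n) f) differentiable (at t))"

text \<open>Euclidean curvature, torsion (in terms of an arbitrary regular parameter t),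
  and the Euclidean speed ds_e/dt.\<close>
definition speed :: "(real \<Rightarrow> real^3) \<Rightarrow> real \<Rightarrow> real" where
  "speed F t = norm (vd F t)"

definition curv :: "(real \<Rightarrow> real^3) \<Rightarrow> real \<Rightarrow> real" where
  "curv F t = norm (cross3 (vd F t) (vd (vd F) t)) / (speed F t) ^ 3"

definition tors :: "(real \<Rightarrow> real^3) \<Rightarrow> real \<Rightarrow> real" where
  "tors F t = (cross3 (vd F t) (vd (vd F) t) \<bullet> vd (vd (vd F)) t)
              / (norm (cross3 (vd F t) (vd (vd F) t)))^2"

text \<open>k' = dk/ds_e, derivative of the curvature w.r.t. Euclidean arclength.\<close>
definition curv_e' :: "(real \<Rightarrow> real^3) \<Rightarrow> real \<Rightarrow> real" where
  "curv_e' F t = deriv (curv F) t / speed F t"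

text \<open>Conformal Frenet frame along chi o F: e(t) in Moeb(3), [e_0] = chi(F(t)),
  s the conformal arclength with ds/dt = sigma t > 0, and the structure equations
  d e_i/ds = ... with conformal curvatures mu1, mu2 (as functions of t).\<close>
definition conformal_frenet ::
  "(real \<Rightarrow> real^3) \<Rightarrow> (real \<Rightarrow> real^5^5) \<Rightarrow> (real \<Rightarrow> real) \<Rightarrow> (real \<Rightarrow> real)
     \<Rightarrow> (real \<Rightarrow> real) \<Rightarrow> bool" where
  "conformal_frenet F e s mu1 mu2 \<longleftrightarrow>
     smooth e \<and> smooth s \<and> smooth mu1 \<and> smooth mu2 \<and>
     (\<forall>t. e t \<in> Moeb3) \<and>
     (\<forall>t. \<exists>c. c \<noteq> 0 \<and> fv (e t) 0 = c *\<^sub>R chi (F t)) \<and>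
     (\<forall>t. deriv s t > 0) \<and>
     (\<forall>t. ((\<lambda>u. fv (e u) 0) has_vector_derivative
            deriv s t *\<^sub>R fv (e t) 1) (at t)) \<and>
     (\<forall>t. ((\<lambda>u. fv (e u) 1) has_vector_derivative
            deriv s t *\<^sub>R (mu1 t *\<^sub>R fv (e t) 0 + fv (e t) 4)) (at t)) \<and>
     (\<forall>t. ((\<lambda>u. fv (e u) 2) has_vector_derivative
            deriv s t *\<^sub>R (fv (e t) 0 + mu2 t *\<^sub>R fv (e t) 3)) (at t)) \<and>
     (\<forall>t. ((\<lambda>u. fv (e u) 3) has_vector_derivative
            deriv s t *\<^sub>R ((- mu2 t) *\<^sub>R fv (e t) 2)) (at t)) \<and>
     (\<forall>t. ((\<lambda>u. fv (e u) 4) has_vector_derivative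
            deriv s t *\<^sub>R (mu1 t *\<^sub>R fv (e t) 1 + fv (e t) 2)) (at t))"

end

theory Submission
  imports Defs
begin

lemma exhaust_5:
  fixes x :: 5
  shows "x = 1 \<or> x = 2 \<or> x = 3 \<or> x = 4 \<or> x = 5"
proof (induct x)
  case (of_int z)
  then have "z = 0 \<or> z = 1 \<or> z = 2 \<or> z = 3 \<or> z = 4" by fastforce
  then show ?case by auto
qed

lemma UNIV_5: "UNIV = {1, 2, 3, 4, 5::5}"
  using exhaust_5 by auto

lemma lor_axis:
  "lor v (axis 1 1) = - v$5" "lor v (axis 2 1) = v$2" "lor v (axis 3 1) = v$3"
  "lor v (axis 4 1) = v$4" "lor v (axis 5 1) = - v$1"
  by (simp_all add: lor_def axis_def)

lemma isom_ker:
  assumes "A \<in> lor_isom" "A *v v = 0"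
  shows "v = 0"
proof -
  have l: "lor v w = 0" for w
  proof -
    have "lor v w = lor (A *v v) (A *v w)" using assms(1) by (simp add: lor_isom_def)
    also have "\<dots> = 0" using assms(2) by (simp add: lor_def)
    finally show ?thesis .
  qed
  have "v $ i = 0" for i
    using exhaust_5[of i] l[of "axis 1 1"] l[of "axis 2 1"] l[of "axis 3 1"]
      l[of "axis 4 1"] l[of "axis 5 1"] by (auto simp: lor_axis)
  then show ?thesis by (simp add: vec_eq_iff)
qed

lemma isom_det_nz:
  assumes "A \<in> lor_isom"
  shows "det A \<noteq> 0"
proof -
  have "inj ((*v) A)"
  proof (rule injI)
    fix x y assume "A *v x = A *v y"
    then have "A *v (x - y) = 0" by (simp add: matrix_vector_mult_diff_distrib)
    then show "x = y" using isom_ker[OF assms \<open>A *v (x - y) = 0\<close>] by simp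
  qed
  then have "det (matrix ((*v) A)) \<noteq> 0"
    using det_nz_iff_inj[of "(*v) A"] by (simp add: matrix_vector_mul_linear)
  then show ?thesis by simp
qed

lemma isom_col1:
  assumes "A \<in> lor_isom"
  shows "A$1$1 + A$5$1 \<noteq> 0"
proof
  assume h: "A$1$1 + A$5$1 = 0"
  let ?v = "A *v axis 1 1"
  have vv: "lor ?v ?v = 0" using assms by (simp add: lor_isom_def lor_def axis_def)
  have c: "?v $ i = A $ i $ 1" for i
    by (simp add: matrix_vector_mult_basis column_def)
  have "?v$2 = 0 \<and> ?v$3 = 0 \<and> ?v$4 = 0 \<and> ?v$1 = 0 \<and> ?v$5 = 0"
  proof -
    have e1: "(A$2$1)^2 + (A$3$1)^2 + (A$4$1)^2 = 2 * A$1$1 * A$5$1"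
      using vv unfolding c lor_def by (simp add: power2_eq_square algebra_simps)
    have e2: "A$5$1 = - A$1$1" using h by simp
    have "?v$2^2 + ?v$3^2 + ?v$4^2 + 2 * (?v$1)^2 = 0"
      using e1 unfolding c e2 by (simp add: power2_eq_square algebra_simps)
    then have "(A$2$1)^2 = 0 \<and> (A$3$1)^2 = 0 \<and> (A$4$1)^2 = 0 \<and> (A$1$1)^2 = 0"
      unfolding c using zero_le_power2[of "A$2$1"] zero_le_power2[of "A$3$1"]
        zero_le_power2[of "A$4$1"] zero_le_power2[of "A$1$1"] by linarith
    then show ?thesis using h unfolding c by simp
  qed
  then have "?v $ i = 0" for i using exhaust_5[of i] by auto
  then have "?v = 0" by (simp add: vec_eq_iff)
  then have "axis 1 (1::real) = (0::real^5)" using isom_ker[OF assms] by blast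
  then show False by (simp add: axis_eq_0_iff)
qed

lemma continuous_det: "continuous_on UNIV (det :: real^5^5 \<Rightarrow> real)"
  unfolding det_def by (intro continuous_intros)

lemma moeb_pos_gen:
  fixes f :: "real^5^5 \<Rightarrow> real"
  assumes "continuous_on UNIV f" "\<And>A. A \<in> lor_isom \<Longrightarrow> f A \<noteq> 0" "f (mat 1) > 0"
    "A \<in> Moeb3"
  shows "f A > 0"
proof (rule ccontr)
  assume "\<not> f A > 0"
  then have fa: "f A \<le> 0" by simp
  have "mat 1 \<in> lor_isom" by (simp add: lor_isom_def)
  then have I: "mat 1 \<in> Moeb3" unfolding Moeb3_def by (simp add: connected_component_refl)
  have "connected (f ` Moeb3)"
    unfolding Moeb3_def
    by (rule connected_continuous_image) (auto intro: continuous_on_subset[OF assms(1)])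
  then have "0 \<in> f ` Moeb3"
    unfolding connected_iff_interval using I assms(3,4) fa
    by (metis imageI less_eq_real_def)
  then obtain B where "B \<in> Moeb3" "f B = 0" by auto
  moreover have "B \<in> lor_isom" using \<open>B \<in> Moeb3\<close> connected_component_subset unfolding Moeb3_def by blast
  ultimately show False using assms(2) by blast
qed

lemma moeb_det: "A \<in> Moeb3 \<Longrightarrow> det A > 0"
  by (rule moeb_pos_gen[OF continuous_det]) (auto simp: isom_det_nz)

lemma moeb_col1: "A \<in> Moeb3 \<Longrightarrow> A$1$1 + A$5$1 > 0"
  by (rule moeb_pos_gen[of "\<lambda>A. A$1$1 + A$5$1"]) (auto intro!: continuous_intros simp: isom_col1 mat_def)

lemma moeb_isom: "A \<in> Moeb3 \<Longrightarrow> A \<in> lor_isom"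
  using connected_component_subset unfolding Moeb3_def by blast

lemma fv_eq: "fv A j = A *v axis (of_nat (j+1)) 1"
  by (simp add: fv_def column_def matrix_vector_mult_def axis_def vec_eq_iff if_distrib cong: if_cong)

lemma moeb_gram:
  assumes "A \<in> Moeb3"
  shows "lor (fv A i) (fv A j) = lor (axis (of_nat (i+1)) 1) (axis (of_nat (j+1)) 1)"
  using moeb_isom[OF assms] by (simp add: fv_eq lor_isom_def)

lemma hvd_inner:
  assumes "(f has_vector_derivative f') (at t)" "(g has_vector_derivative g') (at t)"
  shows "((\<lambda>u. f u \<bullet> g u) has_real_derivative (f t \<bullet> g' + f' \<bullet> g t)) (at t)"
  using bounded_bilinear.has_vector_derivative[OF bounded_bilinear_inner assms]
  by (simp add: has_real_derivative_iff_has_vector_derivative)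

lemma bb_cross: "bounded_bilinear (cross3)"
  using bilinear_cross bilinear_conv_bounded_bilinear by blast

lemma hvd_cross:
  assumes "(f has_vector_derivative f') (at t)" "(g has_vector_derivative g') (at t)"
  shows "((\<lambda>u. cross3 (f u) (g u)) has_vector_derivative (cross3 (f t) g' + cross3 f' (g t))) (at t)"
  using bounded_bilinear.has_vector_derivative[OF bb_cross assms] by simp

lemma hvd_nth:
  assumes "(f has_vector_derivative f') (at t)"
  shows "((\<lambda>u. f u $ k) has_real_derivative f' $ k) (at t)"
  using bounded_linear.has_vector_derivative[OF bounded_linear_vec_nth assms]
  by (simp add: has_real_derivative_iff_has_vector_derivative)

lemma hvd_norm:
  fixes f :: "real \<Rightarrow> 'a::real_inner"
  assumes "(f has_vector_derivative f') (at t)" "f t \<noteq> 0"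
  shows "((\<lambda>u. norm (f u)) has_real_derivative (f t \<bullet> f') / norm (f t)) (at t)"
proof -
  have i: "((\<lambda>u. f u \<bullet> f u) has_real_derivative 2 * (f t \<bullet> f')) (at t)"
    using hvd_inner[OF assms(1) assms(1)] by (simp add: inner_commute)
  have p: "0 < f t \<bullet> f t" using assms(2) by simp
  have "((\<lambda>u. sqrt (f u \<bullet> f u)) has_real_derivative inverse (sqrt (f t \<bullet> f t)) / 2 * (2 * (f t \<bullet> f'))) (at t)"
    by (rule DERIV_chain2[OF DERIV_real_sqrt[OF p] i])
  then show ?thesis by (simp add: norm_eq_sqrt_inner[symmetric] divide_simps)
qed

lemma hvd_normalize:
  fixes f :: "real \<Rightarrow> 'a::real_inner"
  assumes "(f has_vector_derivative f') (at t)" "f t \<noteq> 0"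
  shows "((\<lambda>u. inverse (norm (f u)) *\<^sub>R f u) has_vector_derivative
     (inverse (norm (f t)) *\<^sub>R f' - ((f t \<bullet> f') / (norm (f t))^3) *\<^sub>R f t)) (at t)"
proof -
  have n: "((\<lambda>u. inverse (norm (f u))) has_real_derivative
      - ((f t \<bullet> f') / norm (f t) * inverse (norm (f t) ^ 2))) (at t)"
    using DERIV_inverse_fun[OF hvd_norm[OF assms]] assms(2) by (simp add: power2_eq_square)
  show ?thesis
    using has_vector_derivative_scaleR[OF n assms(1)] assms(2)
    by (simp add: field_simps power3_eq_cube power2_eq_square)
qed

lemma smooth_diff: "smooth f \<Longrightarrow> f differentiable at t"
  unfolding smooth_def by (metis funpow_0)

lemma smooth_vd: "smooth f \<Longrightarrow> smooth (vd f)"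
  unfolding smooth_def by (metis funpow_Suc_right o_apply)

lemma smooth_hvd: "smooth f \<Longrightarrow> (f has_vector_derivative vd f t) (at t)"
  unfolding vd_def using smooth_diff vector_derivative_works by blast

lemma smooth_cont: "smooth f \<Longrightarrow> continuous_on UNIV f"
  using smooth_diff differentiable_imp_continuous_within continuous_at_imp_continuous_on by blast

lemma smooth_isCont: "smooth f \<Longrightarrow> isCont f t"
  using smooth_diff differentiable_imp_continuous_within by blast

lemma deriv_vd:
  fixes g :: "real \<Rightarrow> real"
  assumes "g differentiable at t"
  shows "deriv g t = vd g t"
proof -
  have "(g has_real_derivative deriv g t) (at t)"
    using assms DERIV_deriv_iff_real_differentiable by blast
  then show ?thesis unfolding vd_def
    by (simp add: has_real_derivative_iff_has_vector_derivative vector_derivative_at)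
qed

lemma vd_periodic:
  assumes per: "\<forall>t. g (t + p) = g t" and d: "g differentiable at t"
  shows "vd g (t + p) = vd g t"
proof -
  have h: "(g has_vector_derivative vd g t) (at t)"
    using d vector_derivative_works unfolding vd_def by blast
  have s: "((\<lambda>u. u - p) has_vector_derivative 1) (at (t + p))"
    by (auto intro!: derivative_eq_intros)
  have "((g \<circ> (\<lambda>u. u - p)) has_vector_derivative (1 *\<^sub>R vd g t)) (at (t + p))"
    by (rule vector_diff_chain_at[OF s]) (simp add: h)
  moreover have "g \<circ> (\<lambda>u. u - p) = g"
    using per by (auto simp: fun_eq_iff) (metis diff_add_cancel)
  ultimately have "(g has_vector_derivative vd g t) (at (t + p))" by simp
  then show ?thesis unfolding vd_def by (simp add: vector_derivative_at)
qed

definition proj5 :: "real^5 \<Rightarrow> real^3" where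
  "proj5 v = vector [v$2, v$3, v$4]"

definition mid :: "real^5 \<Rightarrow> real^3 \<Rightarrow> real^3" where
  "mid v x = proj5 v - (v$1) *\<^sub>R x"

definition K5 :: "real^5 \<Rightarrow> real^3 \<Rightarrow> real" where
  "K5 v x = - lor v (chi x)"

lemma sum_5: "sum f (UNIV::5 set) = f 1 + f 2 + f 3 + f 4 + f 5"
  unfolding UNIV_5 by (simp add: ac_simps)

lemma vec5_eq: "(v::'a^5) = w \<longleftrightarrow> v$1 = w$1 \<and> v$2 = w$2 \<and> v$3 = w$3 \<and> v$4 = w$4 \<and> v$5 = w$5"
proof
  assume "v$1 = w$1 \<and> v$2 = w$2 \<and> v$3 = w$3 \<and> v$4 = w$4 \<and> v$5 = w$5"
  then have "v$i = w$i" for i using exhaust_5[of i] by auto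
  then show "v = w" by (simp add: vec_eq_iff)
qed simp

lemma vec3_eq: "(v::'a^3) = w \<longleftrightarrow> v$1 = w$1 \<and> v$2 = w$2 \<and> v$3 = w$3"
proof
  assume "v$1 = w$1 \<and> v$2 = w$2 \<and> v$3 = w$3"
  then have "v$i = w$i" for i using exhaust_3[of i] by auto
  then show "v = w" by (simp add: vec_eq_iff)
qed simp

lemma norm3_sq: "(norm (x::real^3))^2 = x$1*x$1 + x$2*x$2 + x$3*x$3"
  by (simp add: power2_norm_eq_inner inner_vec_def sum_3)

lemma proj5_nth [simp]: "proj5 v $ 1 = v$2" "proj5 v $ 2 = v$3" "proj5 v $ 3 = v$4"
  by (simp_all add: proj5_def)

lemma mid_nth [simp]: "mid v x $ 1 = v$2 - v$1 * x$1" "mid v x $ 2 = v$3 - v$1 * x$2"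
   "mid v x $ 3 = v$4 - v$1 * x$3"
  by (simp_all add: mid_def)

lemma vector_5 [simp]:
 "(vector [a,b,c,d,e] ::('a::zero)^5)$1 = a"
 "(vector [a,b,c,d,e] ::('a::zero)^5)$2 = b"
 "(vector [a,b,c,d,e] ::('a::zero)^5)$3 = c"
 "(vector [a,b,c,d,e] ::('a::zero)^5)$4 = d"
 "(vector [a,b,c,d,e] ::('a::zero)^5)$5 = e"
  unfolding vector_def by simp_all

lemma chi_nth [simp]: "chi x $ 1 = 1" "chi x $ 2 = x$1" "chi x $ 3 = x$2" "chi x $ 4 = x$3"
  "chi x $ 5 = (norm x)^2 / 2"
  by (simp_all add: chi_def)

lemma lor_decomp:
  "lor v w = mid v x \<bullet> mid w x - v$1 * K5 w x - K5 v x * w$1"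
  by (simp add: lor_def K5_def inner_vec_def sum_3 norm3_sq algebra_simps)

lemma lor_chi_chi: "lor (chi x) (chi x) = 0"
  by (simp add: lor_def norm3_sq algebra_simps)

lemma lor_scale: "lor (a *\<^sub>R v) w = a * lor v w" "lor v (a *\<^sub>R w) = a * lor v w"
  by (simp_all add: lor_def algebra_simps)

lemma lor_add: "lor (v + v') w = lor v w + lor v' w" "lor v (w + w') = lor v w + lor v w'"
  by (simp_all add: lor_def algebra_simps)

lemma lor_sym: "lor v w = lor w v"
  by (simp add: lor_def algebra_simps)

lemma mid_chi: "mid (c *\<^sub>R chi x) x = 0"
  by (simp add: vec3_eq)

lemma mid_add: "mid (v + w) x = mid v x + mid w x"
  by (simp add: vec3_eq algebra_simps)

lemma mid_scale: "mid (a *\<^sub>R v) x = a *\<^sub>R mid v x"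
  by (simp add: vec3_eq algebra_simps)

lemma bl_proj5: "bounded_linear proj5"
proof -
  have "linear proj5"
    by (rule linearI) (simp_all add: vec3_eq)
  then show ?thesis by (simp add: linear_conv_bounded_linear)
qed

lemma hvd_mid:
  assumes "(v has_vector_derivative v') (at t)" "(F has_vector_derivative F') (at t)"
  shows "((\<lambda>u. mid (v u) (F u)) has_vector_derivative (mid v' (F t) - (v t $ 1) *\<^sub>R F')) (at t)"
proof -
  have a: "((\<lambda>u. proj5 (v u)) has_vector_derivative proj5 v') (at t)"
    by (rule bounded_linear.has_vector_derivative[OF bl_proj5 assms(1)])
  have b: "((\<lambda>u. v u $ 1) has_real_derivative v' $ 1) (at t)"
    using bounded_linear.has_vector_derivative[OF bounded_linear_vec_nth assms(1)]
    by (simp add: has_real_derivative_iff_has_vector_derivative)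
  have "((\<lambda>u. proj5 (v u) - (v u $ 1) *\<^sub>R F u) has_vector_derivative
      (proj5 v' - ((v t $ 1) *\<^sub>R F' + (v' $ 1) *\<^sub>R F t))) (at t)"
    by (intro has_vector_derivative_diff a has_vector_derivative_scaleR b assms(2))
  then show ?thesis unfolding mid_def by (simp add: algebra_simps)
qed

definition Mx :: "real^3 \<Rightarrow> real^5^5" where
  "Mx x = (\<chi> i j. if j = 1 then chi x $ i
     else if j = 2 then (if i = 2 then 1 else if i = 5 then x$1 else 0)
     else if j = 3 then (if i = 3 then 1 else if i = 5 then x$2 else 0)
     else if j = 4 then (if i = 4 then 1 else if i = 5 then x$3 else 0)
     else (if i = 5 then 1 else 0))"

definition kv :: "real^5 \<Rightarrow> real^3 \<Rightarrow> real^5" where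
  "kv v x = vector [v$1, mid v x $ 1, mid v x $ 2, mid v x $ 3, K5 v x]"

definition Kmat :: "real^5^5 \<Rightarrow> real^3 \<Rightarrow> real^5^5" where
  "Kmat A x = (\<chi> i j. kv (A *v axis j 1) x $ i)"

lemma Mx_kv: "Mx x *v kv v x = v"
  by (simp add: vec5_eq matrix_vector_mult_def sum_5 Mx_def kv_def K5_def lor_def norm3_sq
      algebra_simps)



lemma A_fact: "A = Mx x ** Kmat A x"
proof -
  have "(Mx x ** Kmat A x) $ i $ j = A $ i $ j" for i j
  proof -
    have "(Mx x ** Kmat A x) $ i $ j = (Mx x *v kv (A *v axis j 1) x) $ i"
      by (simp add: matrix_matrix_mult_def matrix_vector_mult_def Kmat_def)
    also have "\<dots> = (A *v axis j 1) $ i" by (simp add: Mx_kv)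
    also have "\<dots> = A $ i $ j" by (simp add: matrix_vector_mult_basis column_def)
    finally show ?thesis .
  qed
  then show ?thesis by (simp add: vec_eq_iff)
qed

lemma det_5_special:
  fixes A :: "real^5^5"
  assumes "A$2$1 = 0" "A$3$1 = 0" "A$4$1 = 0" "A$5$1 = 0"
     "A$5$2 = 0" "A$5$3 = 0" "A$5$4 = 0"
  shows "det A = A$1$1 * A$5$5 * (
    A$2$2 * A$3$3 * A$4$4 +
    A$2$3 * A$3$4 * A$4$2 +
    A$2$4 * A$3$2 * A$4$3 -
    A$2$2 * A$3$4 * A$4$3 -
    A$2$3 * A$3$2 * A$4$4 -
    A$2$4 * A$3$3 * A$4$2)"
proof -
  have f1: "finite {2::5, 3, 4, 5}" "1 \<notin> {2::5, 3,4,5}" by auto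
  have f2: "finite {3::5, 4, 5}" "2 \<notin> {3::5,4,5}" by auto
  have f3: "finite {4::5, 5}" "3 \<notin> {4::5,5}" by auto
  have f4: "finite {5::5}" "4 \<notin> {5::5}" by auto
  show ?thesis
    unfolding det_def UNIV_5
    unfolding sum_over_permutations_insert[OF f1]
    unfolding sum_over_permutations_insert[OF f2]
    unfolding sum_over_permutations_insert[OF f3]
    unfolding sum_over_permutations_insert[OF f4]
    unfolding permutes_sing
    using assms
    by (simp add: sign_swap_id permutation_swap_id sign_compose sign_id swap_id_eq algebra_simps)
qed

lemma det_Mx: "det (Mx x) = 1"
proof -
  have "det (Mx x) = det (transpose (Mx x))" by simp
  also have "\<dots> = 1"
    by (subst det_5_special) (simp_all add: Mx_def transpose_def)
  finally show ?thesis .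
qed

lemma det_frame:
  assumes "fv A 0 = c *\<^sub>R chi x" "c \<noteq> 0" "lor (fv A 1) (fv A 0) = 0" "lor (fv A 2) (fv A 0) = 0"
    "lor (fv A 3) (fv A 0) = 0" "lor (fv A 4) (fv A 0) = -1"
  shows "det A = mid (fv A 1) x \<bullet> cross3 (mid (fv A 2) x) (mid (fv A 3) x)"
proof -
  have cols: "A *v axis 1 1 = fv A 0" "A *v axis 2 1 = fv A 1" "A *v axis 3 1 = fv A 2"
    "A *v axis 4 1 = fv A 3" "A *v axis 5 1 = fv A 4"
    by (simp_all add: fv_eq)
  have k5: "K5 (fv A j) x = - lor (fv A j) (fv A 0) / c" for j
    using assms(1,2) by (simp add: K5_def lor_scale)
  have k50: "K5 (fv A 0) x = 0" unfolding assms(1) by (simp add: K5_def lor_scale lor_chi_chi)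
  have k51: "K5 (fv A 1) x = 0" using k5[of 1] assms(3) by simp
  have k51': "K5 (fv A (Suc 0)) x = 0" using k51 by simp
  have k52: "K5 (fv A 2) x = 0" using k5[of 2] assms(4) by simp
  have k53: "K5 (fv A 3) x = 0" using k5[of 3] assms(5) by simp
  have k54: "K5 (fv A 4) x = 1 / c" using k5[of 4] assms(6) by simp
  have m0: "mid (fv A 0) x = 0" using assms(1) by (simp add: mid_chi)
  have f01: "fv A 0 $ 1 = c" using assms(1) by simp
  let ?K = "Kmat A x"
  have K: "\<And>i j. ?K $ i $ j = kv (A *v axis j 1) x $ i" by (simp add: Kmat_def)
  have "det A = det (Mx x ** ?K)" using A_fact by metis
  also have "\<dots> = det ?K" by (simp add: det_mul det_Mx)
  also have "\<dots> = ?K$1$1 * ?K$5$5 * (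
    ?K$2$2 * ?K$3$3 * ?K$4$4 +
    ?K$2$3 * ?K$3$4 * ?K$4$2 +
    ?K$2$4 * ?K$3$2 * ?K$4$3 -
    ?K$2$2 * ?K$3$4 * ?K$4$3 -
    ?K$2$3 * ?K$3$2 * ?K$4$4 -
    ?K$2$4 * ?K$3$3 * ?K$4$2)"
    by (rule det_5_special) (simp_all add: K cols kv_def m0 k50 k51 k51' k52 k53 k54 del: mid_nth)
  also have "\<dots> = mid (fv A 1) x \<bullet> cross3 (mid (fv A 2) x) (mid (fv A 3) x)"
    using assms(2)
    by (simp add: K cols kv_def k50 k51 k51' k52 k53 k54 f01 cross3_def inner_vec_def sum_3 algebra_simps
       del: mid_nth)
  finally show ?thesis .
qed

lemma winding:
  fixes a b w :: "real \<Rightarrow> real"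
  assumes p: "p \<ge> 0"
    and da: "\<And>t. (a has_real_derivative a' t) (at t)"
    and db: "\<And>t. (b has_real_derivative b' t) (at t)"
    and un: "\<And>t. (a t)^2 + (b t)^2 = 1"
    and per: "a p = a 0" "b p = b 0"
    and cw: "continuous_on UNIV w"
    and w: "\<And>t. w t = a t * b' t - b t * a' t"
  shows "\<exists>n::int. integral {0..p} w = 2 * pi * of_int n"
proof -
  define \<Theta> where "\<Theta> u = integral {0..u} w" for u
  have dT: "(\<Theta> has_real_derivative w t) (at t within {0..p})" if "t \<in> {0..p}" for t
    unfolding \<Theta>_def has_real_derivative_iff_has_vector_derivative
    by (rule integral_has_vector_derivative[OF continuous_on_subset[OF cw] that]) simp
  have orth: "a t * a' t + b t * b' t = 0" for t
  proof -
    have "((\<lambda>u. (a u)^2 + (b u)^2) has_real_derivative 2 * a t * a' t + 2 * b t * b' t) (at t)"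
      by (auto intro!: derivative_eq_intros da db)
    moreover have "((\<lambda>u. (a u)^2 + (b u)^2) has_real_derivative 0) (at t)"
      using un by simp
    ultimately have "2 * a t * a' t + 2 * b t * b' t = 0" using DERIV_unique by blast
    then show ?thesis by simp
  qed
  have k1: "a' t + w t * b t = 0" for t
  proof -
    have "a' t + w t * b t = a' t * ((a t)^2 + (b t)^2) + (a t * b' t - b t * a' t) * b t"
      using un[of t] w[of t] by simp
    also have "\<dots> = a t * (a t * a' t + b t * b' t)" by (simp add: power2_eq_square algebra_simps)
    finally show ?thesis using orth[of t] by simp
  qed
  have k2: "b' t - w t * a t = 0" for t
  proof -
    have "b' t - w t * a t = b' t * ((a t)^2 + (b t)^2) - (a t * b' t - b t * a' t) * a t"
      using un[of t] w[of t] by simp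
    also have "\<dots> = b t * (a t * a' t + b t * b' t)" by (simp add: power2_eq_square algebra_simps)
    finally show ?thesis using orth[of t] by simp
  qed
  define G1 where "G1 u = a u * cos (\<Theta> u) + b u * sin (\<Theta> u)" for u
  define G2 where "G2 u = b u * cos (\<Theta> u) - a u * sin (\<Theta> u)" for u
  have dG1: "(G1 has_real_derivative 0) (at t within {0..p})" if "t \<in> {0..p}" for t
  proof -
    have "(G1 has_real_derivative (a' t * cos (\<Theta> t) - a t * sin (\<Theta> t) * w t
          + (b' t * sin (\<Theta> t) + b t * cos (\<Theta> t) * w t))) (at t within {0..p})"
      unfolding G1_def
      by (auto intro!: derivative_eq_intros dT[OF that] has_field_derivative_at_within[OF da]
          has_field_derivative_at_within[OF db])
    moreover have "a' t * cos (\<Theta> t) - a t * sin (\<Theta> t) * w t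
          + (b' t * sin (\<Theta> t) + b t * cos (\<Theta> t) * w t)
        = cos (\<Theta> t) * (a' t + w t * b t) + sin (\<Theta> t) * (b' t - w t * a t)"
      by (simp add: algebra_simps)
    ultimately show ?thesis using k1 k2 by simp
  qed
  have dG2: "(G2 has_real_derivative 0) (at t within {0..p})" if "t \<in> {0..p}" for t
  proof -
    have "(G2 has_real_derivative (b' t * cos (\<Theta> t) - b t * sin (\<Theta> t) * w t
          - (a' t * sin (\<Theta> t) + a t * cos (\<Theta> t) * w t))) (at t within {0..p})"
      unfolding G2_def
      by (auto intro!: derivative_eq_intros dT[OF that] has_field_derivative_at_within[OF da]
          has_field_derivative_at_within[OF db])
    moreover have "b' t * cos (\<Theta> t) - b t * sin (\<Theta> t) * w t
          - (a' t * sin (\<Theta> t) + a t * cos (\<Theta> t) * w t)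
        = cos (\<Theta> t) * (b' t - w t * a t) - sin (\<Theta> t) * (a' t + w t * b t)"
      by (simp add: algebra_simps)
    ultimately show ?thesis using k1 k2 by simp
  qed
  obtain c1 where c1: "\<forall>x\<in>{0..p}. G1 x = c1"
    using has_field_derivative_zero_constant[of "{0..p}" G1] dG1 by auto
  obtain c2 where c2: "\<forall>x\<in>{0..p}. G2 x = c2"
    using has_field_derivative_zero_constant[of "{0..p}" G2] dG2 by auto
  have T0: "\<Theta> 0 = 0" by (simp add: \<Theta>_def)
  have e1: "G1 p = G1 0" "G2 p = G2 0" using c1 c2 p by auto
  then have e1': "a 0 * cos (\<Theta> p) + b 0 * sin (\<Theta> p) = a 0"
    "b 0 * cos (\<Theta> p) - a 0 * sin (\<Theta> p) = b 0"
    using per by (simp_all add: G1_def G2_def T0)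
  have "cos (\<Theta> p) = ((a 0)^2 + (b 0)^2) * cos (\<Theta> p)" using un[of 0] by simp
  also have "\<dots> = a 0 * (a 0 * cos (\<Theta> p) + b 0 * sin (\<Theta> p)) + b 0 * (b 0 * cos (\<Theta> p) - a 0 * sin (\<Theta> p))"
    by (simp add: power2_eq_square algebra_simps)
  also have "\<dots> = 1" using e1' un[of 0] by (simp add: power2_eq_square)
  finally obtain n :: int where "\<Theta> p = of_int n * 2 * pi" using cos_one_2pi_int by blast
  then show ?thesis by (intro exI[of _ n]) (simp add: \<Theta>_def)
qed

lemma cross_unit:
  fixes a b :: "real^3"
  assumes "a \<bullet> a = 1" "b \<bullet> b = 1" "a \<bullet> b = 0"
  shows "cross3 a b \<bullet> cross3 a b = 1"
proof -
  have na: "norm a = 1" using assms(1) by (simp add: norm_eq_sqrt_inner)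
  have nb: "norm b = 1" using assms(2) by (simp add: norm_eq_sqrt_inner)
  have "(norm (cross3 a b))^2 = 1" using norm_cross[of a b] na nb assms(3) by simp
  then show ?thesis by (simp add: power2_norm_eq_inner)
qed

lemma orth_expand:
  fixes a b x :: "real^3"
  assumes "a \<bullet> a = 1" "b \<bullet> b = 1" "a \<bullet> b = 0"
  shows "x = (x \<bullet> a) *\<^sub>R a + (x \<bullet> b) *\<^sub>R b + (x \<bullet> cross3 a b) *\<^sub>R cross3 a b"
proof -
  let ?n = "cross3 a b"
  have nn: "?n \<bullet> ?n = 1" using cross_unit[OF assms] .
  have h1: "cross3 ?n (cross3 x ?n) = x - (x \<bullet> ?n) *\<^sub>R ?n"
    using Lagrange[of ?n x ?n] nn by (simp add: inner_commute)
  have h2: "cross3 x ?n = (x \<bullet> b) *\<^sub>R a - (x \<bullet> a) *\<^sub>R b"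
    using Lagrange[of x a b] .
  have h3: "cross3 ?n a = b"
    using Lagrange[of a a b] cross_skew[of ?n a] assms by (simp add: inner_commute)
  have h4: "cross3 ?n b = - a"
    using Lagrange[of b a b] cross_skew[of ?n b] assms by (simp add: inner_commute)
  have "cross3 ?n (cross3 x ?n) = (x \<bullet> b) *\<^sub>R b + (x \<bullet> a) *\<^sub>R a"
    unfolding h2 by (simp add: cross_mult_right Cross3.right_diff_distrib h3 h4)
  then show ?thesis using h1 by (simp add: algebra_simps)
qed

locale cs =
  fixes F :: "real \<Rightarrow> real^3" and e :: "real \<Rightarrow> real^5^5" and s mu1 mu2 :: "real \<Rightarrow> real"
  assumes smoothF: "smooth F" and regular: "\<forall>t. vd F t \<noteq> 0" and curv_nz: "\<forall>t. curv F t \<noteq> 0"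
    and frame: "conformal_frenet F e s mu1 mu2"
begin

declare One_nat_def [simp del]

definition "D1 = vd F"
definition "D2 = vd D1"
definition "D3 = vd D2"
definition E :: "nat \<Rightarrow> real \<Rightarrow> real^5" where "E j = (\<lambda>u. fv (e u) j)"
definition "sd t = deriv s t"
definition "cc t = E 0 t $ 1"
definition "m j t = mid (E j t) (F t)"
definition "Cv t = cross3 (D1 t) (D2 t)"
definition "T t = inverse (norm (D1 t)) *\<^sub>R D1 t"
definition "B t = inverse (norm (Cv t)) *\<^sub>R Cv t"
definition "N t = cross3 (B t) (T t)"
definition "Td t = inverse (norm (D1 t)) *\<^sub>R D2 t - ((D1 t \<bullet> D2 t) / (norm (D1 t))^3) *\<^sub>R D1 t"
definition "Cd t = cross3 (D1 t) (D3 t)"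
definition "Bd t = inverse (norm (Cv t)) *\<^sub>R Cd t - ((Cv t \<bullet> Cd t) / (norm (Cv t))^3) *\<^sub>R Cv t"
definition "Nd t = cross3 (B t) (Td t) + cross3 (Bd t) (T t)"

lemma sD1: "smooth D1" and sD2: "smooth D2" and sD3: "smooth D3"
  unfolding D1_def D2_def D3_def using smoothF smooth_vd by blast+

lemma dF: "(F has_vector_derivative D1 t) (at t)"
  and dD1: "(D1 has_vector_derivative D2 t) (at t)"
  and dD2: "(D2 has_vector_derivative D3 t) (at t)"
  unfolding D1_def D2_def D3_def using smoothF smooth_vd smooth_hvd by blast+

lemma D1nz: "D1 t \<noteq> 0" using regular D1_def by simp

lemma Cvnz: "Cv t \<noteq> 0"
proof
  assume "Cv t = 0"
  then have "curv F t = 0" by (simp add: curv_def Cv_def D1_def D2_def)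
  then show False using curv_nz by simp
qed

lemma curv_eq: "curv F t = norm (Cv t) / (norm (D1 t))^3"
  by (simp add: curv_def Cv_def D1_def D2_def speed_def)

lemma tors_eq: "tors F t = (Cv t \<bullet> D3 t) / (norm (Cv t))^2"
  by (simp add: tors_def Cv_def D1_def D2_def D3_def)

lemma speed_eq: "speed F t = norm (D1 t)"
  by (simp add: speed_def D1_def)

lemma dT: "(T has_vector_derivative Td t) (at t)"
  unfolding T_def[abs_def] Td_def by (rule hvd_normalize[OF dD1[unfolded D1_def] D1nz[unfolded D1_def], folded D1_def])

lemma smooth_s: "smooth s" and smooth_mu2: "smooth mu2" and smooth_mu1: "smooth mu1"
  and moeb: "e t \<in> Moeb3" and sdpos: "sd t > 0"
  using frame by (simp_all add: conformal_frenet_def sd_def)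

lemma dE0: "(E 0 has_vector_derivative sd t *\<^sub>R E 1 t) (at t)"
  and dE1: "(E 1 has_vector_derivative sd t *\<^sub>R (mu1 t *\<^sub>R E 0 t + E 4 t)) (at t)"
  and dE2: "(E 2 has_vector_derivative sd t *\<^sub>R (E 0 t + mu2 t *\<^sub>R E 3 t)) (at t)"
  and dE3: "(E 3 has_vector_derivative sd t *\<^sub>R ((- mu2 t) *\<^sub>R E 2 t)) (at t)"
  and dE4: "(E 4 has_vector_derivative sd t *\<^sub>R (mu1 t *\<^sub>R E 1 t + E 2 t)) (at t)"
  using frame by (simp_all add: conformal_frenet_def E_def sd_def)

lemma E0: "E 0 t = cc t *\<^sub>R chi (F t)"
proof -
  have "\<exists>c. c \<noteq> 0 \<and> fv (e t) 0 = c *\<^sub>R chi (F t)"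
    using frame unfolding conformal_frenet_def by blast
  then obtain c where "fv (e t) 0 = c *\<^sub>R chi (F t)" by blast
  then show ?thesis by (simp add: cc_def E_def)
qed

lemma ccpos: "cc t > 0"
proof -
  have "e t $1$1 + e t$5$1 > 0" using moeb_col1[OF moeb] .
  moreover have "e t $ i $ 1 = E 0 t $ i" for i by (simp add: E_def fv_def column_def)
  ultimately have "E 0 t $ 1 + E 0 t $ 5 > 0" by simp
  then have "cc t * (1 + (norm (F t))^2 / 2) > 0"
    using E0[of t] by (simp add: algebra_simps)
  moreover have "1 + (norm (F t))^2 / 2 > 0" by (simp add: add_pos_nonneg)
  ultimately show ?thesis by (simp add: zero_less_mult_iff)
qed

lemma gram_raw: "lor (E i t) (E j t) = lor (axis (of_nat (i+1)) 1) (axis (of_nat (j+1)) 1)"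
  unfolding E_def by (rule moeb_gram[OF moeb])

lemma gram:
  "lor (E 1 t) (E 0 t) = 0" "lor (E 2 t) (E 0 t) = 0" "lor (E 3 t) (E 0 t) = 0"
  "lor (E 4 t) (E 0 t) = -1"
  "lor (E 1 t) (E 1 t) = 1" "lor (E 2 t) (E 2 t) = 1" "lor (E 3 t) (E 3 t) = 1"
  "lor (E 1 t) (E 2 t) = 0" "lor (E 1 t) (E 3 t) = 0" "lor (E 2 t) (E 3 t) = 0"
  unfolding gram_raw by (simp_all add: lor_def axis_def)

lemma K5E: "K5 (E j t) (F t) = - lor (E j t) (E 0 t) / cc t"
  using ccpos[of t] by (simp add: K5_def E0[of t] lor_scale)

lemma K5E123: "K5 (E 1 t) (F t) = 0" "K5 (E 2 t) (F t) = 0" "K5 (E 3 t) (F t) = 0"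
  by (simp_all add: K5E gram)

lemma m0: "m 0 t = 0"
  by (simp add: m_def E0 mid_chi)

lemma m0f: "m 0 = (\<lambda>u. 0)"
  using m0 by auto

lemma gram3: "m i t \<bullet> m j t = lor (E i t) (E j t)" if "i \<in> {1,2,3}" "j \<in> {1,2,3}"
  using that lor_decomp[of "E i t" "E j t" "F t"] K5E123[of t] by (auto simp: m_def)

lemma gramm: "m 1 t \<bullet> m 1 t = 1" "m 2 t \<bullet> m 2 t = 1" "m 3 t \<bullet> m 3 t = 1"
  "m 1 t \<bullet> m 2 t = 0" "m 1 t \<bullet> m 3 t = 0" "m 2 t \<bullet> m 3 t = 0"
  by (simp_all add: gram3 gram)

lemma dm_gen: "(E j has_vector_derivative v) (at t) \<Longrightarrow>
   (m j has_vector_derivative (mid v (F t) - E j t $ 1 *\<^sub>R D1 t)) (at t)"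
  unfolding m_def[abs_def] by (rule hvd_mid[OF _ dF])

lemma dm0: "(m 0 has_vector_derivative (sd t *\<^sub>R m 1 t - cc t *\<^sub>R D1 t)) (at t)"
  using dm_gen[OF dE0[of t]] by (simp add: mid_scale m_def cc_def)

lemma dm1: "(m 1 has_vector_derivative (sd t *\<^sub>R m 4 t - E 1 t $ 1 *\<^sub>R D1 t)) (at t)"
  using dm_gen[OF dE1[of t]] m0[of t] by (simp add: mid_scale mid_add m_def)

lemma dm2: "(m 2 has_vector_derivative ((sd t * mu2 t) *\<^sub>R m 3 t - E 2 t $ 1 *\<^sub>R D1 t)) (at t)"
  using dm_gen[OF dE2[of t]] m0[of t] by (simp add: mid_scale mid_add m_def)

lemma dm4: "(m 4 has_vector_derivative (sd t *\<^sub>R (mu1 t *\<^sub>R m 1 t + m 2 t) - E 4 t $ 1 *\<^sub>R D1 t)) (at t)"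
  using dm_gen[OF dE4[of t]] by (simp add: mid_scale mid_add m_def)

lemma m1_raw: "sd t *\<^sub>R m 1 t = cc t *\<^sub>R D1 t"
proof -
  have "(m 0 has_vector_derivative 0) (at t)" by (simp add: m0f)
  then have "0 = sd t *\<^sub>R m 1 t - cc t *\<^sub>R D1 t"
    using vector_derivative_unique_at dm0 by blast
  then show ?thesis by simp
qed

lemma sd_eq: "sd t = cc t * norm (D1 t)"
proof -
  have n1: "norm (m 1 t) = 1" using gramm(1)[of t] by (simp add: norm_eq_sqrt_inner)
  have "sd t = norm (sd t *\<^sub>R m 1 t)"
    using sdpos[of t] n1 by simp
  also have "\<dots> = cc t * norm (D1 t)" using m1_raw[of t] ccpos[of t] by simp
  finally show ?thesis .
qed

lemma m1T: "m 1 t = T t"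
proof -
  have "m 1 t = inverse (sd t) *\<^sub>R (cc t *\<^sub>R D1 t)"
    using m1_raw[of t] sdpos[of t] by (metis inverse_nonzero_iff_nonzero less_irrefl scaleR_left_imp_eq scaleR_scaleR right_inverse scaleR_one)
  then show ?thesis
    using ccpos[of t] D1nz[of t] by (simp add: T_def sd_eq)
qed

lemma dCv: "(Cv has_vector_derivative Cd t) (at t)"
  using hvd_cross[OF dD1 dD2] unfolding Cv_def[abs_def] Cd_def by simp

lemma dB: "(B has_vector_derivative Bd t) (at t)"
  unfolding B_def[abs_def] Bd_def by (rule hvd_normalize[OF dCv Cvnz])

lemma dN: "(N has_vector_derivative Nd t) (at t)"
  unfolding N_def[abs_def] Nd_def using hvd_cross[OF dB dT] by (simp add: add.commute)

lemma D1eq: "D1 t = norm (D1 t) *\<^sub>R T t"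
  using D1nz[of t] by (simp add: T_def)

lemma Cveq: "Cv t = norm (Cv t) *\<^sub>R B t"
  using Cvnz[of t] by (simp add: B_def)

lemma TT: "T t \<bullet> T t = 1"
  using D1nz[of t] by (simp add: T_def inner_commute power2_norm_eq_inner[symmetric] power2_eq_square)

lemma BB: "B t \<bullet> B t = 1"
  using Cvnz[of t] by (simp add: B_def inner_commute power2_norm_eq_inner[symmetric] power2_eq_square)

lemma TB: "T t \<bullet> B t = 0"
  by (simp add: T_def B_def Cv_def dot_cross_self)

lemma BT: "B t \<bullet> T t = 0" using TB by (simp add: inner_commute)

lemma NN: "N t \<bullet> N t = 1"
  unfolding N_def by (rule cross_unit[OF BB TT BT])

lemma NT: "N t \<bullet> T t = 0" and NB: "N t \<bullet> B t = 0"
  by (simp_all add: N_def dot_cross_self)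

lemma TN: "T t \<bullet> N t = 0" and BN: "B t \<bullet> N t = 0"
  using NT NB by (simp_all add: inner_commute)

lemma TxN: "cross3 (T t) (N t) = B t"
  using Lagrange[of "T t" "B t" "T t"] TT[of t] TB[of t] by (simp add: N_def)

lemma TxB: "cross3 (T t) (B t) = - N t"
  using cross_skew[of "T t" "B t"] by (simp add: N_def)

lemma BxN: "cross3 (B t) (N t) = - T t"
  using Lagrange[of "B t" "B t" "T t"] BB[of t] BT[of t] by (simp add: N_def)

lemma expandTNB: "x = (x \<bullet> T t) *\<^sub>R T t + (x \<bullet> N t) *\<^sub>R N t + (x \<bullet> B t) *\<^sub>R B t"
  using orth_expand[OF BB TT BT, of x] by (simp add: N_def[symmetric] algebra_simps)

lemma D1N: "D1 t \<bullet> N t = 0" and D1B: "D1 t \<bullet> B t = 0" and D1T: "D1 t \<bullet> T t = norm (D1 t)"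
  by (subst D1eq; simp add: TN TB TT)+

lemma D2B: "D2 t \<bullet> B t = 0"
  by (simp add: B_def Cv_def dot_cross_self)

lemma D2N: "D2 t \<bullet> N t = norm (Cv t) / norm (D1 t)"
proof -
  have "N t = (inverse (norm (Cv t)) * inverse (norm (D1 t))) *\<^sub>R cross3 (Cv t) (D1 t)"
    by (simp add: N_def B_def T_def cross_mult_left cross_mult_right)
  moreover have "D2 t \<bullet> cross3 (Cv t) (D1 t) = Cv t \<bullet> Cv t"
    using cross_triple[of "Cv t" "D1 t" "D2 t"] by (simp add: Cv_def inner_commute)
  moreover have "norm (Cv t) \<noteq> 0" using Cvnz[of t] by simp
  ultimately show ?thesis
    by (simp add: power2_norm_eq_inner[symmetric] power2_eq_square field_simps)
qed

lemma TdT: "Td t \<bullet> T t = 0"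
proof -
  have n: "norm (D1 t) \<noteq> 0" using D1nz[of t] by simp
  have d: "D1 t \<bullet> D1 t = norm (D1 t) * norm (D1 t)" by (simp add: power2_norm_eq_inner[symmetric] power2_eq_square)
  have "Td t \<bullet> D1 t = 0" unfolding Td_def
    using n by (simp add: inner_diff_left inner_commute[of "D2 t"] d power3_eq_cube field_simps)
  then show ?thesis by (simp add: T_def)
qed

lemma TdN: "Td t \<bullet> N t = norm (Cv t) / (norm (D1 t))^2"
  using D1nz[of t] by (simp add: Td_def D2N D1N inner_diff_left power2_eq_square field_simps)

lemma TdB: "Td t \<bullet> B t = 0"
  by (simp add: Td_def D2B D1B inner_diff_left)

lemma Td_eq: "Td t = (norm (Cv t) / (norm (D1 t))^2) *\<^sub>R N t"
  using expandTNB[of "Td t" t] by (simp add: TdT TdN TdB)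

lemma NCv: "N t \<bullet> Cv t = 0"
  by (subst Cveq) (simp add: NB)

lemma TCv: "T t \<bullet> Cv t = 0"
  by (subst Cveq) (simp add: TB)

lemma NCd: "N t \<bullet> Cd t = - (B t \<bullet> D3 t) * norm (D1 t)"
proof -
  have "N t \<bullet> Cd t = (B t \<bullet> D1 t) * (T t \<bullet> D3 t) - (B t \<bullet> D3 t) * (T t \<bullet> D1 t)"
    unfolding N_def Cd_def by (rule dot_cross)
  then show ?thesis using D1B[of t] D1T[of t] by (simp add: inner_commute)
qed

lemma NBd: "N t \<bullet> Bd t = - tors F t * norm (D1 t)"
proof -
  have "B t \<bullet> D3 t = inverse (norm (Cv t)) * (Cv t \<bullet> D3 t)" by (simp add: B_def)
  then show ?thesis
    using Cvnz[of t] by (simp add: Bd_def inner_diff_right NCv NCd tors_eq power2_eq_square field_simps)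
qed

lemma BBd: "B t \<bullet> Bd t = 0"
proof -
  have n: "norm (Cv t) \<noteq> 0" using Cvnz[of t] by simp
  have d: "Cv t \<bullet> Cv t = norm (Cv t) * norm (Cv t)" by (simp add: power2_norm_eq_inner[symmetric] power2_eq_square)
  have "Cv t \<bullet> Bd t = 0" unfolding Bd_def
    using n by (simp add: inner_diff_right d power3_eq_cube field_simps)
  then show ?thesis by (simp add: B_def)
qed

lemma TBd: "T t \<bullet> Bd t = 0"
proof -
  have "T t \<bullet> Cd t = 0" by (simp add: T_def Cd_def dot_cross_self)
  then show ?thesis by (simp add: Bd_def inner_diff_right TCv)
qed

lemma NNd: "N t \<bullet> Nd t = 0"
proof -
  have a: "N t \<bullet> cross3 (B t) (Td t) = 0"
    unfolding N_def dot_cross using BB[of t] TdT[of t] BT[of t] by (simp add: inner_commute)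
  have b: "N t \<bullet> cross3 (Bd t) (T t) = 0"
    unfolding N_def dot_cross using BBd[of t] TT[of t] BT[of t] by (simp add: inner_commute)
  show ?thesis using a b by (simp add: Nd_def inner_add_right)
qed

lemma BNd: "B t \<bullet> Nd t = tors F t * norm (D1 t)"
proof -
  have a: "B t \<bullet> cross3 (B t) (Td t) = 0" by (simp add: dot_cross_self)
  have b: "B t \<bullet> cross3 (Bd t) (T t) = - (N t \<bullet> Bd t)"
    using cross_triple[of "Bd t" "T t" "B t"] TxB[of t] by (simp add: inner_commute)
  show ?thesis using a b NBd[of t] by (simp add: Nd_def inner_add_right)
qed

lemma TNd: "T t \<bullet> Nd t = - norm (Cv t) / (norm (D1 t))^2"
proof -
  have a: "T t \<bullet> cross3 (B t) (Td t) = - norm (Cv t) / (norm (D1 t))^2"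
    using TT[of t] by (simp add: Td_eq cross_mult_right BxN)
  have b: "T t \<bullet> cross3 (Bd t) (T t) = 0" by (simp add: dot_cross_self)
  show ?thesis using a b by (simp add: Nd_def inner_add_right)
qed

lemma m1f: "m 1 = T" using m1T by auto

lemma m4_eq: "m 4 t = inverse (sd t) *\<^sub>R (Td t + E 1 t $ 1 *\<^sub>R D1 t)"
proof -
  have "(m 1 has_vector_derivative Td t) (at t)" using dT m1f by simp
  then have "Td t = sd t *\<^sub>R m 4 t - E 1 t $ 1 *\<^sub>R D1 t"
    using vector_derivative_unique_at dm1 by blast
  then have "sd t *\<^sub>R m 4 t = Td t + E 1 t $ 1 *\<^sub>R D1 t" by (simp add: algebra_simps)
  then show ?thesis using sdpos[of t] by (metis less_irrefl scaleR_scaleR left_inverse scaleR_one)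
qed

lemma D1Nd: "D1 t \<bullet> Nd t = - norm (Cv t) / norm (D1 t)"
  using D1nz[of t] by (subst D1eq) (simp add: TNd power2_eq_square)

lemma D1Bd: "D1 t \<bullet> Bd t = 0"
  by (subst D1eq) (simp add: TBd)

lemma TdNd: "Td t \<bullet> Nd t = 0" by (simp add: Td_eq NNd)

lemma TdBd: "Td t \<bullet> Bd t = - (norm (Cv t) / (norm (D1 t))^2) * tors F t * norm (D1 t)"
  by (simp add: Td_eq NBd)

lemma m4N: "m 4 t \<bullet> N t = curv F t / cc t"
  using ccpos[of t] D1nz[of t]
  by (simp add: m4_eq inner_add_left TdN D1N curv_eq sd_eq power2_eq_square power3_eq_cube field_simps)

lemma m4B: "m 4 t \<bullet> B t = 0"
  by (simp add: m4_eq inner_add_left TdB D1B)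

lemma m4Nd: "m 4 t \<bullet> Nd t = - E 1 t $ 1 * norm (Cv t) / (norm (D1 t) * sd t)"
  by (simp add: m4_eq inner_add_left TdNd D1Nd field_simps)

lemma m4Bd: "m 4 t \<bullet> Bd t = - (norm (Cv t) / (norm (D1 t))^2) * tors F t * norm (D1 t) / sd t"
  by (simp add: m4_eq inner_add_left TdBd D1Bd field_simps)

lemma dcc: "(cc has_real_derivative sd t * E 1 t $ 1) (at t)"
proof -
  have "cc = (\<lambda>u. E 0 u $ 1)" by (auto simp: cc_def)
  then show ?thesis using hvd_nth[OF dE0[of t], of 1] by simp
qed

lemma m4'N: "(sd t *\<^sub>R (mu1 t *\<^sub>R m 1 t + m 2 t) - E 4 t $ 1 *\<^sub>R D1 t) \<bullet> N t = sd t * (m 2 t \<bullet> N t)"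
  by (simp add: inner_diff_left inner_add_left m1T TN D1N)

lemma m4'B: "(sd t *\<^sub>R (mu1 t *\<^sub>R m 1 t + m 2 t) - E 4 t $ 1 *\<^sub>R D1 t) \<bullet> B t = sd t * (m 2 t \<bullet> B t)"
  by (simp add: inner_diff_left inner_add_left m1T TB D1B)

lemma curv_fun: "curv F = (\<lambda>u. cc u * (m 4 u \<bullet> N u))"
proof (rule ext)
  fix u show "curv F u = cc u * (m 4 u \<bullet> N u)" using ccpos[of u] by (simp add: m4N)
qed

lemma curv_deriv: "(curv F has_real_derivative cc t * sd t * (m 2 t \<bullet> N t)) (at t)"
proof -
  have d: "(curv F has_real_derivative
      (sd t * E 1 t $ 1) * (m 4 t \<bullet> N t) + cc t * (m 4 t \<bullet> Nd t + sd t * (m 2 t \<bullet> N t))) (at t)"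
    unfolding curv_fun
    using DERIV_mult[OF dcc[of t] hvd_inner[OF dm4[of t] dN[of t]]] by (simp add: m4'N m1T TN D1N algebra_simps)
  have "(sd t * E 1 t $ 1) * (m 4 t \<bullet> N t) + cc t * (m 4 t \<bullet> Nd t) = 0"
    using ccpos[of t] D1nz[of t] sdpos[of t]
    by (simp add: m4N m4Nd curv_eq sd_eq power3_eq_cube field_simps)
  then have "(sd t * E 1 t $ 1) * (m 4 t \<bullet> N t) + cc t * (m 4 t \<bullet> Nd t + sd t * (m 2 t \<bullet> N t))
      = cc t * sd t * (m 2 t \<bullet> N t)" by (simp add: algebra_simps)
  then show ?thesis using d by simp
qed

lemma m2B: "m 2 t \<bullet> B t = curv F t * tors F t * norm (D1 t) / (cc t * sd t)"
proof -
  have f: "(\<lambda>u. m 4 u \<bullet> B u) = (\<lambda>u. 0)" by (simp add: m4B)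
  have "((\<lambda>u. m 4 u \<bullet> B u) has_real_derivative (m 4 t \<bullet> Bd t + sd t * (m 2 t \<bullet> B t))) (at t)"
    using hvd_inner[OF dm4[of t] dB[of t]] by (simp add: m4'B)
  then have "m 4 t \<bullet> Bd t + sd t * (m 2 t \<bullet> B t) = 0"
    unfolding f using DERIV_unique DERIV_const by blast
  then show ?thesis
    using ccpos[of t] D1nz[of t] sdpos[of t]
    by (simp add: m4Bd curv_eq sd_eq power2_eq_square power3_eq_cube field_simps)
qed

lemma detpos: "m 1 t \<bullet> cross3 (m 2 t) (m 3 t) > 0"
proof -
  have h: "det (e t) = mid (fv (e t) 1) (F t) \<bullet> cross3 (mid (fv (e t) 2) (F t)) (mid (fv (e t) 3) (F t))"
    apply (rule det_frame[of "e t" "cc t" "F t"])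
    using E0[of t] ccpos[of t] gram[of t] by (simp_all add: E_def)
  have "det (e t) = m 1 t \<bullet> cross3 (m 2 t) (m 3 t)"
    using h by (simp add: m_def E_def)
  then show ?thesis using moeb_det[OF moeb[of t]] by simp
qed

lemma m2T: "m 2 t \<bullet> T t = 0" and m3T: "m 3 t \<bullet> T t = 0"
  using gramm(4,5)[of t] m1T[of t] by (simp_all add: inner_commute)

lemma m3_eq: "m 3 t = cross3 (T t) (m 2 t)"
proof -
  have TT': "T t \<bullet> T t = 1" by (rule TT)
  have m22: "m 2 t \<bullet> m 2 t = 1" by (rule gramm(2))
  have Tm2: "T t \<bullet> m 2 t = 0" using m2T[of t] by (simp add: inner_commute)
  define l where "l = m 3 t \<bullet> cross3 (T t) (m 2 t)"
  have ex: "m 3 t = l *\<^sub>R cross3 (T t) (m 2 t)"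
    using orth_expand[OF TT' m22 Tm2, of "m 3 t"] m3T[of t] gramm(6)[of t]
    by (simp add: l_def inner_commute)
  have "1 = m 3 t \<bullet> m 3 t" using gramm(3)[of t] by simp
  also have "\<dots> = l * l" using cross_unit[OF TT' m22 Tm2] by (subst (1 2) ex) simp
  finally have l2: "l * l = 1" by simp
  have "m 1 t \<bullet> cross3 (m 2 t) (m 3 t) = l"
    using cross_triple[of "T t" "m 2 t" "m 3 t"] m1T[of t]
    by (simp add: l_def inner_commute)
  then have "l > 0" using detpos[of t] by simp
  moreover have "l = 1 \<or> l = -1" using l2 square_eq_1_iff by blast
  ultimately have "l = 1" by auto
  then show ?thesis using ex by simp
qed

definition "q1 t = m 2 t \<bullet> N t"
definition "q2 t = m 2 t \<bullet> B t"

lemma m2_exp: "m 2 t = q1 t *\<^sub>R N t + q2 t *\<^sub>R B t"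
  using expandTNB[of "m 2 t" t] m2T[of t] by (simp add: q1_def q2_def)

lemma m3_exp: "m 3 t = q1 t *\<^sub>R B t - q2 t *\<^sub>R N t"
  using m3_eq[of t] m2_exp[of t] by (simp add: cross_add_right cross_mult_right TxN TxB)

lemma q_unit: "(q1 t)^2 + (q2 t)^2 = 1"
proof -
  have "1 = m 2 t \<bullet> m 2 t" using gramm(2)[of t] by simp
  also have "\<dots> = (q1 t)^2 + (q2 t)^2"
    by (subst (1 2) m2_exp) (simp add: inner_add_left inner_add_right NN BB NB BN power2_eq_square)
  finally show ?thesis by simp
qed

definition "q1d t = q2 t * tors F t * norm (D1 t) - sd t * mu2 t * q2 t"
definition "q2d t = - q1 t * tors F t * norm (D1 t) + sd t * mu2 t * q1 t"

lemma dq1: "(q1 has_real_derivative q1d t) (at t)"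
proof -
  have "(q1 has_real_derivative (m 2 t \<bullet> Nd t + ((sd t * mu2 t) *\<^sub>R m 3 t - E 2 t $ 1 *\<^sub>R D1 t) \<bullet> N t)) (at t)"
    unfolding q1_def[abs_def] by (rule hvd_inner[OF dm2 dN])
  moreover have "m 2 t \<bullet> Nd t = q2 t * tors F t * norm (D1 t)"
    by (subst m2_exp) (simp add: inner_add_left NNd BNd)
  moreover have "((sd t * mu2 t) *\<^sub>R m 3 t - E 2 t $ 1 *\<^sub>R D1 t) \<bullet> N t = - sd t * mu2 t * q2 t"
    by (simp add: m3_exp inner_diff_left BN NN D1N)
  ultimately show ?thesis by (simp add: q1d_def)
qed

lemma dq2: "(q2 has_real_derivative q2d t) (at t)"
proof -
  have "(q2 has_real_derivative (m 2 t \<bullet> Bd t + ((sd t * mu2 t) *\<^sub>R m 3 t - E 2 t $ 1 *\<^sub>R D1 t) \<bullet> B t)) (at t)"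
    unfolding q2_def[abs_def] by (rule hvd_inner[OF dm2 dB])
  moreover have "m 2 t \<bullet> Bd t = - q1 t * tors F t * norm (D1 t)"
    by (subst m2_exp) (simp add: inner_add_left NBd BBd)
  moreover have "((sd t * mu2 t) *\<^sub>R m 3 t - E 2 t $ 1 *\<^sub>R D1 t) \<bullet> B t = sd t * mu2 t * q1 t"
    by (simp add: m3_exp inner_diff_left BB NB D1B)
  ultimately show ?thesis by (simp add: q2d_def)
qed

lemma omega: "q1 t * q2d t - q2 t * q1d t = mu2 t * deriv s t - tors F t * speed F t"
proof -
  have "q1 t * q2d t - q2 t * q1d t = ((q1 t)^2 + (q2 t)^2) * (sd t * mu2 t - tors F t * norm (D1 t))"
    by (simp add: q1d_def q2d_def power2_eq_square algebra_simps)
  then show ?thesis by (simp add: q_unit sd_def speed_eq)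
qed

lemma Kpos: "cc t * sd t > 0" using ccpos[of t] sdpos[of t] by simp

lemma dcurv: "deriv (curv F) t = cc t * sd t * q1 t"
  using DERIV_imp_deriv[OF curv_deriv] by (simp add: q1_def)

lemma Xeq: "curv F t * tors F t * norm (D1 t) = cc t * sd t * q2 t"
proof -
  have k: "cc t * sd t \<noteq> 0" using ccpos[of t] sdpos[of t] by simp
  have "q2 t = (curv F t * tors F t * norm (D1 t)) / (cc t * sd t)" using m2B[of t] by (simp add: q2_def)
  then have "q2 t * (cc t * sd t) = curv F t * tors F t * norm (D1 t)" using k by (simp add: eq_divide_eq)
  then show ?thesis by (metis mult.commute)
qed

lemma K_sqrt: "cc t * sd t = sqrt ((deriv (curv F) t)^2 + (curv F t * tors F t * norm (D1 t))^2)"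
proof -
  have "(deriv (curv F) t)^2 + (curv F t * tors F t * norm (D1 t))^2 = (cc t * sd t)^2 * ((q1 t)^2 + (q2 t)^2)"
    unfolding dcurv Xeq by (simp add: power_mult_distrib distrib_left)
  then show ?thesis using q_unit[of t] Kpos[of t] by simp
qed

lemma q1_rep: "q1 t = deriv (curv F) t / sqrt ((deriv (curv F) t)^2 + (curv F t * tors F t * norm (D1 t))^2)"
proof -
  have h: "q1 t = deriv (curv F) t / (cc t * sd t)" using ccpos[of t] sdpos[of t] by (simp add: dcurv)
  show ?thesis using h unfolding K_sqrt .
qed

lemma q2_rep: "q2 t = (curv F t * tors F t * norm (D1 t)) / sqrt ((deriv (curv F) t)^2 + (curv F t * tors F t * norm (D1 t))^2)"
proof -
  have h: "q2 t = (curv F t * tors F t * norm (D1 t)) / (cc t * sd t)"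
    using ccpos[of t] sdpos[of t] Xeq[of t] by simp
  show ?thesis using h unfolding K_sqrt .
qed

lemma cont_D: "isCont D1 t" "isCont D2 t" "isCont D3 t"
  using smooth_isCont sD1 sD2 sD3 by blast+

lemma cont_ab: "continuous_on UNIV (\<lambda>t. mu2 t * deriv s t)" "continuous_on UNIV (\<lambda>t. tors F t * speed F t)"
proof -
  have ds: "deriv s = vd s"
    using deriv_vd smooth_diff[OF smooth_s] by (auto simp: fun_eq_iff)
  have c1: "isCont (\<lambda>t. mu2 t * deriv s t) t" for t
    unfolding ds using smooth_isCont[OF smooth_mu2] smooth_isCont[OF smooth_vd[OF smooth_s]]
    by (intro continuous_intros) auto
  have eqf: "(\<lambda>t. tors F t * speed F t) =
      (\<lambda>t. (cross3 (D1 t) (D2 t) \<bullet> D3 t) / (norm (cross3 (D1 t) (D2 t)))^2 * norm (D1 t))"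
    by (auto simp: fun_eq_iff tors_eq speed_eq Cv_def)
  have c2: "isCont (\<lambda>t. tors F t * speed F t) t" for t
    unfolding eqf using cont_D[of t] Cvnz[of t]
    by (intro continuous_intros continuous_cross) (auto simp: Cv_def)
  show "continuous_on UNIV (\<lambda>t. mu2 t * deriv s t)" using c1 by (intro continuous_at_imp_continuous_on) auto
  show "continuous_on UNIV (\<lambda>t. tors F t * speed F t)" using c2 by (intro continuous_at_imp_continuous_on) auto
qed

lemma cont_w: "continuous_on UNIV (\<lambda>t. mu2 t * deriv s t - tors F t * speed F t)"
  by (rule continuous_on_diff[OF cont_ab])

lemma main_loc:
  assumes p: "p > 0" and per: "\<forall>t. F (t + p) = F t"
  shows "\<exists>n::int. integral {0..p} (\<lambda>t. mu2 t * deriv s t - tors F t * speed F t) = 2 * pi * of_int n"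
proof -
  have D1p: "\<forall>t. D1 (t+p) = D1 t"
    using vd_periodic[OF per smooth_diff[OF smoothF]] by (simp add: D1_def)
  have D2p: "\<forall>t. D2 (t+p) = D2 t"
    using vd_periodic[OF D1p smooth_diff[OF sD1]] by (simp add: D2_def)
  have D3p: "\<forall>t. D3 (t+p) = D3 t"
    using vd_periodic[OF D2p smooth_diff[OF sD2]] by (simp add: D3_def)
  have curvp: "\<forall>t. curv F (t+p) = curv F t" by (simp add: curv_eq Cv_def D1p D2p)
  have torsp: "\<forall>t. tors F (t+p) = tors F t" by (simp add: tors_eq Cv_def D1p D2p D3p)
  have cdiff: "curv F differentiable at t" for t
    using curv_deriv[of t] by (meson has_field_derivative_imp_has_derivative differentiableI)
  have dcp: "deriv (curv F) (t+p) = deriv (curv F) t" for t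
    using deriv_vd[OF cdiff[of t]] deriv_vd[OF cdiff[of "t+p"]] vd_periodic[OF curvp cdiff[of t]] by simp
  have q1p: "q1 p = q1 0"
    using q1_rep[of p] q1_rep[of 0] D1p curvp torsp dcp[of 0] by (metis add_0)
  have q2p: "q2 p = q2 0"
    using q2_rep[of p] q2_rep[of 0] D1p curvp torsp dcp[of 0] by (metis add_0)
  show ?thesis
    by (rule winding[of p q1 q1d q2 q2d]) (use p dq1 dq2 q_unit q1p q2p cont_w omega in auto)
qed

end

theorem mainTheorem3:
  fixes F :: "real \<Rightarrow> real^3" and p :: real
    and e :: "real \<Rightarrow> real^5^5" and s mu1 mu2 :: "real \<Rightarrow> real"
  assumes smoothF: "smooth F"
    and period: "p > 0" "\<forall>t. F (t + p) = F t"
    and regular: "\<forall>t. vd F t \<noteq> 0"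
    and curv_nz: "\<forall>t. curv F t \<noteq> 0"
    and generic: "\<forall>t. (curv_e' F t)^2 + (curv F t)^2 * (tors F t)^2 \<noteq> 0"
    and frame: "conformal_frenet F e s mu1 mu2"
  shows "\<exists>m::int.
    (1 / (2*pi)) * integral {0..p} (\<lambda>t. mu2 t * deriv s t)
  - (1 / (2*pi)) * integral {0..p} (\<lambda>t. tors F t * speed F t) = of_int m"
proof -
  interpret cs F e s mu1 mu2
    using smoothF regular curv_nz frame by unfold_locales
  obtain n :: int where n: "integral {0..p} (\<lambda>t. mu2 t * deriv s t - tors F t * speed F t) = 2 * pi * of_int n"
    using main_loc[OF period] by blast
  have i1: "(\<lambda>t. mu2 t * deriv s t) integrable_on {0..p}"
    using cont_ab(1) by (intro integrable_continuous_interval) (auto intro: continuous_on_subset)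
  have i2: "(\<lambda>t. tors F t * speed F t) integrable_on {0..p}"
    using cont_ab(2) by (intro integrable_continuous_interval) (auto intro: continuous_on_subset)
  have "integral {0..p} (\<lambda>t. mu2 t * deriv s t) - integral {0..p} (\<lambda>t. tors F t * speed F t) = 2 * pi * of_int n"
    using n integral_diff[OF i1 i2] by simp
  then have "(1 / (2*pi)) * integral {0..p} (\<lambda>t. mu2 t * deriv s t)
    - (1 / (2*pi)) * integral {0..p} (\<lambda>t. tors F t * speed F t) = of_int n"
    by (simp add: field_simps)
  then show ?thesis by blast
qed

end
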